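(* For every $u\in L_{\mathrm{up}}$, the set $F_u$ is $2$-thin, i.e. every vertex $v\in V$ lies in $V_\ell$ for at most two links $\ell\in F_u$.
   Context: Let $(G=(V,E),L,w)$ be a WTAP instance (spanning tree $G$, links $L\subseteq\binom V2$, weights $w>0$) with a fixed root $r\in V$, and let $F\subseteq L$ be a WTAP solution, i.e. $\bigcup_{\ell\in F}P_\ell=E$, where $P_\ell$ is the edge set of the tree path between the endpoints of $\ell$ and $V_\ell$ its vertex set. Ancestors of $v$ are the vertices on the $r$-$v$ path in $G$ (including $r$ and $v$); descendants are defined reciprocally. $\mathrm{apex}(\ell)$ is the vertex of $V_\ell$ closest to $r$. An up-link is a link $\{t,b\}$ with $t$ an ancestor of $b$; $L_{\mathrm{up}}$ is the set of up-links. For $v\in V$ let $B_v=\{\ell\in F\colon\mathrm{apex}(\ell)\text{ is a descendant of }v\}$. For an up-link $u=\{t,b\}$ with $t$ an ancestor of $b$, let $v_u$ be the ancestor of $t$ farthest from $r$ such that $P_u\subseteq\bigcup_{\ell\in B_{v_u}}P_\ell$, and fix $F_u\subseteq B_{v_u}$ inclusion-wise minimal with $P_u\subseteq\bigcup_{\ell\in F_u}P_\ell$. *)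

theory Defs
  imports Complex_Main
begin

text \<open>Graphs: vertices of type 'a, edges are 2-element sets of vertices.
A simple path is a nonempty distinct vertex list whose consecutive vertices are adjacent.\<close>

definition is_path :: "'a set set \<Rightarrow> 'a list \<Rightarrow> bool" where
  "is_path E p \<longleftrightarrow> p \<noteq> [] \<and> distinct p \<and> (\<forall>i. Suc i < length p \<longrightarrow> {p ! i, p ! Suc i} \<in> E)"

definition is_tree :: "'a set \<Rightarrow> 'a set set \<Rightarrow> bool" where
  "is_tree V E \<longleftrightarrow> finite V \<and> V \<noteq> {} \<and>
     (\<forall>e\<in>E. \<exists>x y. e = {x, y} \<and> x \<noteq> y \<and> x \<in> V \<and> y \<in> V) \<and>
     (\<forall>u\<in>V. \<forall>v\<in>V. \<exists>!p. is_path E p \<and> hd p = u \<and> last p = v)"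

definition binom2 :: "'a set \<Rightarrow> 'a set set" where
  "binom2 V = {e. e \<subseteq> V \<and> card e = 2}"

definition tpath :: "'a set set \<Rightarrow> 'a \<Rightarrow> 'a \<Rightarrow> 'a list" where
  "tpath E u v = (THE p. is_path E p \<and> hd p = u \<and> last p = v)"

definition path_verts :: "'a set set \<Rightarrow> 'a \<Rightarrow> 'a \<Rightarrow> 'a set" where
  "path_verts E u v = set (tpath E u v)"

definition path_edges :: "'a set set \<Rightarrow> 'a \<Rightarrow> 'a \<Rightarrow> 'a set set" where
  "path_edges E u v = {{tpath E u v ! i, tpath E u v ! Suc i} | i. Suc i < length (tpath E u v)}"

definition link_edges :: "'a set set \<Rightarrow> 'a set \<Rightarrow> 'a set set" where
  "link_edges E l = \<Union>{path_edges E x y | x y. l = {x, y}}"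

definition link_verts :: "'a set set \<Rightarrow> 'a set \<Rightarrow> 'a set" where
  "link_verts E l = \<Union>{path_verts E x y | x y. l = {x, y}}"

text \<open>Distance from the root (number of vertices on the root path).\<close>
definition depth :: "'a set set \<Rightarrow> 'a \<Rightarrow> 'a \<Rightarrow> nat" where
  "depth E r x = length (tpath E r x)"

definition ancestor :: "'a set set \<Rightarrow> 'a \<Rightarrow> 'a \<Rightarrow> 'a \<Rightarrow> bool" where
  "ancestor E r a x \<longleftrightarrow> a \<in> path_verts E r x"

definition apex :: "'a set set \<Rightarrow> 'a \<Rightarrow> 'a set \<Rightarrow> 'a" where
  "apex E r l = (THE a. a \<in> link_verts E l \<and> (\<forall>x\<in>link_verts E l. depth E r a \<le> depth E r x))"

definition Bset :: "'a set set \<Rightarrow> 'a \<Rightarrow> 'a set set \<Rightarrow> 'a \<Rightarrow> 'a set set" where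
  "Bset E r F v = {l \<in> F. ancestor E r v (apex E r l)}"

definition up_links :: "'a set set \<Rightarrow> 'a \<Rightarrow> 'a set set \<Rightarrow> 'a set set" where
  "up_links E r L = {l \<in> L. \<exists>t b. l = {t, b} \<and> ancestor E r t b}"

definition thin2 :: "'a set set \<Rightarrow> 'a set \<Rightarrow> 'a set set \<Rightarrow> bool" where
  "thin2 E V S \<longleftrightarrow> (\<forall>v\<in>V. card {l \<in> S. v \<in> link_verts E l} \<le> 2)"

end

theory Submission
  imports Defs
begin

definition edges_of :: "'a list \<Rightarrow> 'a set set" where
  "edges_of p = {{p ! i, p ! Suc i} | i. Suc i < length p}"

definition Rel :: "'a set set \<Rightarrow> ('a \<times> 'a) set" where
  "Rel S = {(a, b). {a, b} \<in> S}"

lemma tree_tpath: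
  assumes "is_tree V E" "x \<in> V" "y \<in> V"
  shows "is_path E (tpath E x y) \<and> hd (tpath E x y) = x \<and> last (tpath E x y) = y"
proof -
  have "\<exists>!p. is_path E p \<and> hd p = x \<and> last p = y" using assms unfolding is_tree_def by blast
  then show ?thesis unfolding tpath_def by (rule theI')
qed

lemma tree_unique:
  assumes "is_tree V E" "x \<in> V" "y \<in> V" "is_path E q" "hd q = x" "last q = y"
  shows "q = tpath E x y"
proof -
  have "\<exists>!p. is_path E p \<and> hd p = x \<and> last p = y" using assms unfolding is_tree_def by blast
  then show ?thesis unfolding tpath_def using assms by (simp add: the1_equality)
qed

lemma path_in_V:
  assumes "is_tree V E" "is_path E p" "length p \<ge> 2" "i < length p"
  shows "p ! i \<in> V"
proof (cases "Suc i < length p")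
  case True
  then have "{p ! i, p ! Suc i} \<in> E" using assms(2) unfolding is_path_def by blast
  then show ?thesis using assms(1) unfolding is_tree_def by (metis doubleton_eq_iff insert_iff)
next
  case False
  then obtain j where j: "i = Suc j" "Suc j < length p" using assms(3,4)
    by (metis One_nat_def Suc_1 Suc_le_lessD Suc_lessI less_Suc_eq_0_disj)
  then have "{p ! j, p ! Suc j} \<in> E" using assms(2) unfolding is_path_def by blast
  then show ?thesis using assms(1) j unfolding is_tree_def by (metis doubleton_eq_iff insert_iff)
qed

lemma is_path_rev:
  assumes "is_path E p" shows "is_path E (rev p)"
  unfolding is_path_def
proof (intro conjI allI impI)
  show "rev p \<noteq> []" "distinct (rev p)" using assms unfolding is_path_def by auto
  fix i assume i: "Suc i < length (rev p)"
  define j where "j = length p - Suc (Suc i)"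
  have "Suc j < length p" using i unfolding j_def by simp
  then have "{p ! j, p ! Suc j} \<in> E" using assms unfolding is_path_def by blast
  moreover have "rev p ! i = p ! Suc j" "rev p ! Suc i = p ! j"
    using i unfolding j_def by (auto simp: rev_nth Suc_diff_Suc)
  ultimately show "{rev p ! i, rev p ! Suc i} \<in> E" by (simp add: insert_commute)
qed

lemma edges_of_rev: "edges_of (rev p) = edges_of p"
proof -
  have *: "edges_of (rev q) \<subseteq> edges_of q" for q :: "'a list"
  proof
    fix e assume "e \<in> edges_of (rev q)"
    then obtain i where i: "Suc i < length q" "e = {rev q ! i, rev q ! Suc i}"
      unfolding edges_of_def by auto
    define j where "j = length q - Suc (Suc i)"
    have "Suc j < length q" using i unfolding j_def by simp
    moreover have "rev q ! i = q ! Suc j" "rev q ! Suc i = q ! j"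
      using i unfolding j_def by (auto simp: rev_nth Suc_diff_Suc)
    ultimately show "e \<in> edges_of q" using i unfolding edges_of_def by (auto simp: insert_commute)
  qed
  show ?thesis using *[of p] *[of "rev p"] by auto
qed

lemma tpath_sym:
  assumes "is_tree V E" "x \<in> V" "y \<in> V"
  shows "tpath E y x = rev (tpath E x y)"
proof -
  have p: "is_path E (tpath E x y) \<and> hd (tpath E x y) = x \<and> last (tpath E x y) = y"
    using tree_tpath[OF assms] .
  then have ne: "tpath E x y \<noteq> []" unfolding is_path_def by auto
  show ?thesis
    by (rule tree_unique[OF assms(1,3,2), symmetric])
       (use p ne is_path_rev in \<open>auto simp: hd_rev last_rev\<close>)
qed

lemma link_pair:
  assumes "is_tree V E" "x \<in> V" "y \<in> V"
  shows "link_edges E {x, y} = edges_of (tpath E x y)"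
    and "link_verts E {x, y} = set (tpath E x y)"
proof -
  have s: "tpath E y x = rev (tpath E x y)" using tpath_sym[OF assms] .
  have pe: "path_edges E a c = edges_of (tpath E a c)" for a c
    unfolding path_edges_def edges_of_def by simp
  have "{path_edges E a c | a c. {x, y} = {a, c}} = {edges_of (tpath E x y)}"
    using s unfolding pe
    by (auto simp: doubleton_eq_iff edges_of_rev)
  then show "link_edges E {x, y} = edges_of (tpath E x y)" unfolding link_edges_def by simp
  have "{path_verts E a c | a c. {x, y} = {a, c}} = {set (tpath E x y)}"
    using s unfolding path_verts_def by (auto simp: doubleton_eq_iff)
  then show "link_verts E {x, y} = set (tpath E x y)" unfolding link_verts_def by simp
qed

lemma walk_to_path:
  assumes "(x, y) \<in> (Rel S)\<^sup>*"
  shows "\<exists>q. is_path S q \<and> hd q = x \<and> last q = y"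
  using assms
proof (induction rule: rtrancl_induct)
  case base
  show ?case by (rule exI[of _ "[x]"]) (simp add: is_path_def)
next
  case (step y z)
  then obtain q where q: "is_path S q" "hd q = x" "last q = y" by blast
  have yz: "{y, z} \<in> S" using step(2) unfolding Rel_def by simp
  have ne: "q \<noteq> []" "distinct q" using q(1) unfolding is_path_def by auto
  show ?case
  proof (cases "z \<in> set q")
    case True
    then obtain i where i: "i < length q" "q ! i = z" by (metis in_set_conv_nth)
    let ?q = "take (Suc i) q"
    have "is_path S ?q" using q(1) i unfolding is_path_def by auto
    moreover have "hd ?q = x" using q(2) ne by (simp add: hd_take)
    moreover have "last ?q = z" using i by (simp add: take_Suc_conv_app_nth)
    ultimately show ?thesis by blast
  next
    case False
    let ?q = "q @ [z]"
    have "is_path S ?q" unfolding is_path_def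
    proof (intro conjI allI impI)
      show "?q \<noteq> []" by simp
      show "distinct ?q" using ne False by simp
      fix j assume j: "Suc j < length ?q"
      show "{?q ! j, ?q ! Suc j} \<in> S"
      proof (cases "Suc j < length q")
        case True
        then show ?thesis using q(1) unfolding is_path_def by (simp add: nth_append)
      next
        case False
        then have "Suc j = length q" using j by simp
        then have "?q ! j = last q" "?q ! Suc j = z" using ne
          by (auto simp: nth_append last_conv_nth simp del: One_nat_def dest: sym)
        then show ?thesis using yz q(3) by simp
      qed
    qed
    then show ?thesis using q ne by auto
  qed
qed

lemma sym_Rel: "sym ((Rel S)\<^sup>*)"
  by (rule sym_rtrancl) (auto simp: sym_def Rel_def insert_commute)

lemma hd_conn:
  assumes "edges_of p \<subseteq> S" "i < length p" "p \<noteq> []"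
  shows "(hd p, p ! i) \<in> (Rel S)\<^sup>*"
  using assms(2)
proof (induction i)
  case 0
  then show ?case using assms(3) by (simp add: hd_conv_nth)
next
  case (Suc i)
  then have "{p ! i, p ! Suc i} \<in> S" using assms(1) unfolding edges_of_def by blast
  then have "(p ! i, p ! Suc i) \<in> Rel S" unfolding Rel_def by simp
  with Suc show ?case by (meson Suc_lessD rtrancl.rtrancl_into_rtrancl)
qed

lemma set_conn:
  assumes "edges_of p \<subseteq> S" "a \<in> set p" "c \<in> set p"
  shows "(a, c) \<in> (Rel S)\<^sup>*"
proof -
  have ne: "p \<noteq> []" using assms(2) by auto
  obtain i j where "i < length p" "p ! i = a" "j < length p" "p ! j = c"
    using assms(2,3) by (metis in_set_conv_nth)
  then have "(hd p, a) \<in> (Rel S)\<^sup>*" "(hd p, c) \<in> (Rel S)\<^sup>*"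
    using hd_conn[OF assms(1) _ ne] by auto
  then show ?thesis using sym_Rel[of S] by (meson rtrancl_trans symD)
qed

lemma is_path_mono: "is_path S q \<Longrightarrow> S \<subseteq> E \<Longrightarrow> is_path E q"
  unfolding is_path_def by blast

lemma sub_path:
  assumes "is_path E p" "i \<le> j" "j < length p"
  defines "s \<equiv> drop i (take (Suc j) p)"
  shows "is_path E s" "hd s = p ! i" "last s = p ! j" "length s = Suc j - i"
    "\<And>m. m < length s \<Longrightarrow> s ! m = p ! (i + m)"
proof -
  show len: "length s = Suc j - i" unfolding s_def using assms by simp
  show nth: "\<And>m. m < length s \<Longrightarrow> s ! m = p ! (i + m)"
    unfolding s_def using assms by simp
  have ne: "s \<noteq> []" using len assms by auto
  show "is_path E s" unfolding is_path_def
  proof (intro conjI allI impI)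
    show "s \<noteq> []" by (rule ne)
    show "distinct s" unfolding s_def using assms(1) unfolding is_path_def by simp
    fix m assume m: "Suc m < length s"
    have "Suc (i + m) < length p" using m len assms by simp
    then have "{p ! (i + m), p ! Suc (i + m)} \<in> E" using assms(1) unfolding is_path_def by blast
    then show "{s ! m, s ! Suc m} \<in> E" using nth[of m] nth[of "Suc m"] m by simp
  qed
  show "hd s = p ! i" using nth[of 0] ne by (simp add: hd_conv_nth)
  show "last s = p ! j" using nth[of "length s - 1"] ne len assms by (simp add: last_conv_nth)
qed

lemma key:
  assumes tree: "is_tree V E" and p: "is_path E p" and ik: "i \<le> k" and kj: "k < j"
    and jl: "j < length p" and conn: "(p ! i, p ! j) \<in> (Rel S)\<^sup>*" and SE: "S \<subseteq> E"
  shows "{p ! k, p ! Suc k} \<in> S"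
proof -
  obtain q where q: "is_path S q" "hd q = p ! i" "last q = p ! j"
    using walk_to_path[OF conn] by blast
  define s where "s = drop i (take (Suc j) p)"
  have s: "is_path E s" "hd s = p ! i" "last s = p ! j" "length s = Suc j - i"
    "\<And>m. m < length s \<Longrightarrow> s ! m = p ! (i + m)"
    using sub_path[OF p, where i=i and j=j] ik kj jl unfolding s_def by auto
  have l2: "length p \<ge> 2" using kj jl by simp
  have iV: "p ! i \<in> V" and jV: "p ! j \<in> V"
    using path_in_V[OF tree p l2] ik kj jl by auto
  have "q = tpath E (p ! i) (p ! j)"
    using tree_unique[OF tree iV jV is_path_mono[OF q(1) SE] q(2,3)] .
  moreover have "s = tpath E (p ! i) (p ! j)"
    using tree_unique[OF tree iV jV s(1-3)] .
  ultimately have "q = s" by simp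
  moreover have "Suc (k - i) < length s" using s(4) ik kj by simp
  ultimately have "{s ! (k - i), s ! Suc (k - i)} \<in> S" using q(1) unfolding is_path_def by blast
  moreover have "s ! (k - i) = p ! k" "s ! Suc (k - i) = p ! Suc k"
    using s(4) s(5)[of "k - i"] s(5)[of "Suc (k - i)"] ik kj by auto
  ultimately show ?thesis by simp
qed

lemma binom2_pair:
  assumes "l \<in> binom2 V" obtains x y where "l = {x, y}" "x \<in> V" "y \<in> V"
  using assms unfolding binom2_def by (auto simp: card_2_iff)

lemma ell_conn:
  assumes tree: "is_tree V E" and l: "l \<in> binom2 V" and v: "v \<in> link_verts E l"
    and e: "e \<in> link_edges E l" and a: "a \<in> e"
  shows "(v, a) \<in> (Rel (link_edges E l))\<^sup>*"
proof -
  obtain x y where xy: "l = {x, y}" "x \<in> V" "y \<in> V" using binom2_pair[OF l] .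
  note lp = link_pair[OF tree xy(2,3)]
  have "a \<in> set (tpath E x y)" using e a unfolding xy lp edges_of_def
    by (auto intro: nth_mem)
  moreover have "v \<in> set (tpath E x y)" using v unfolding xy lp .
  ultimately show ?thesis unfolding xy lp by (intro set_conn) auto
qed

lemma ell_sub:
  assumes tree: "is_tree V E" and l: "l \<in> binom2 V"
  shows "link_edges E l \<subseteq> E"
proof -
  obtain x y where xy: "l = {x, y}" "x \<in> V" "y \<in> V" using binom2_pair[OF l] .
  have "is_path E (tpath E x y)" using tree_tpath[OF tree xy(2,3)] by simp
  then show ?thesis unfolding xy link_pair[OF tree xy(2,3)] edges_of_def is_path_def by blast
qed

lemma three_elems:
  assumes "\<not> card A \<le> 2"
  obtains a b c where "a \<in> A" "b \<in> A" "c \<in> A" "a \<noteq> b" "a \<noteq> c" "b \<noteq> c"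
proof -
  have "3 \<le> card A" using assms by simp
  then obtain B where "B \<subseteq> A" "card B = 3" by (rule obtain_subset_with_card_n)
  then show ?thesis using that by (auto simp: card_Suc_eq numeral_3_eq_3) blast
qed

theorem lemma11:
  fixes V :: "'a set" and E L F :: "'a set set" and w :: "'a set \<Rightarrow> real" and r :: 'a
    and u :: "'a set" and t b vu :: 'a and Fu :: "'a set set"
  assumes tree: "is_tree V E"
    and links: "L \<subseteq> binom2 V"
    and wpos: "\<forall>l\<in>L. w l > 0"
    and root: "r \<in> V"
    and FL: "F \<subseteq> L"
    and Fsol: "\<Union>(link_edges E ` F) = E"
    and u_up: "u \<in> up_links E r L"
    and u_tb: "u = {t, b}" and tb: "ancestor E r t b"
    and vu_anc: "ancestor E r vu t"
    and vu_cov: "link_edges E u \<subseteq> \<Union>(link_edges E ` Bset E r F vu)"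
    and vu_far: "\<forall>x. ancestor E r x t \<and> link_edges E u \<subseteq> \<Union>(link_edges E ` Bset E r F x)
                   \<longrightarrow> depth E r x \<le> depth E r vu"
    and Fu_sub: "Fu \<subseteq> Bset E r F vu"
    and Fu_cov: "link_edges E u \<subseteq> \<Union>(link_edges E ` Fu)"
    and Fu_min: "\<forall>F'. F' \<subset> Fu \<longrightarrow> \<not> link_edges E u \<subseteq> \<Union>(link_edges E ` F')"
  shows "thin2 E V Fu"
proof -
  have uV: "u \<in> binom2 V" using u_up links unfolding up_links_def by auto
  then have tV: "t \<in> V" and bV: "b \<in> V" unfolding u_tb binom2_def by auto
  define P where "P = tpath E t b"
  have Pp: "is_path E P" using tree_tpath[OF tree tV bV] unfolding P_def by simp
  have uP: "link_edges E u = edges_of P" unfolding u_tb P_def using link_pair[OF tree tV bV] by simp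
  have FuB: "Fu \<subseteq> binom2 V" using Fu_sub FL links unfolding Bset_def by auto
  define priv where "priv l k \<longleftrightarrow> Suc k < length P \<and> {P ! k, P ! Suc k} \<in> link_edges E l \<and>
      (\<forall>l'\<in>Fu. l' \<noteq> l \<longrightarrow> {P ! k, P ! Suc k} \<notin> link_edges E l')" for l k
  have privex: "\<exists>k. priv l k" if l: "l \<in> Fu" for l
  proof -
    have "Fu - {l} \<subset> Fu" using l by auto
    then have "\<not> link_edges E u \<subseteq> \<Union>(link_edges E ` (Fu - {l}))" using Fu_min by blast
    then obtain e where e: "e \<in> edges_of P" "e \<notin> \<Union>(link_edges E ` (Fu - {l}))"
      unfolding uP by blast
    then have el: "e \<in> link_edges E l" using Fu_cov unfolding uP by blast
    obtain k where k: "Suc k < length P" "e = {P ! k, P ! Suc k}" using e(1) unfolding edges_of_def by blast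
    show ?thesis unfolding priv_def using k el e(2) by blast
  qed
  show ?thesis unfolding thin2_def
  proof (rule ballI, rule ccontr)
    fix v assume vV: "v \<in> V"
    define A where "A = {l \<in> Fu. v \<in> link_verts E l}"
    assume "\<not> card {l \<in> Fu. v \<in> link_verts E l} \<le> 2"
    then have cA: "\<not> card A \<le> 2" unfolding A_def .
    obtain l1 l2 l3 where ls: "l1 \<in> A" "l2 \<in> A" "l3 \<in> A" "l1 \<noteq> l2" "l1 \<noteq> l3" "l2 \<noteq> l3"
      by (rule three_elems[OF cA])
    have mid: False if la: "la \<in> A" and lb: "lb \<in> A" and lc: "lc \<in> A" and ab: "la \<noteq> lb"
      and cb: "lc \<noteq> lb" and pa: "priv la ka" and pb: "priv lb kb" and pc: "priv lc kc"
      and kab: "ka < kb" and kbc: "kb < kc" for la lb lc ka kb kc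
    proof -
      define S where "S = link_edges E la \<union> link_edges E lc"
      have laB: "la \<in> binom2 V" and lcB: "lc \<in> binom2 V" using la lc FuB unfolding A_def by auto
      have SE: "S \<subseteq> E" unfolding S_def using ell_sub[OF tree laB] ell_sub[OF tree lcB] by blast
      have m1: "(Rel (link_edges E la))\<^sup>* \<subseteq> (Rel S)\<^sup>*" "(Rel (link_edges E lc))\<^sup>* \<subseteq> (Rel S)\<^sup>*"
        by (auto intro!: rtrancl_mono simp: Rel_def S_def)
      have "(v, P ! ka) \<in> (Rel (link_edges E la))\<^sup>*"
        by (rule ell_conn[OF tree laB _ _ insertI1]) (use la pa in \<open>auto simp: A_def priv_def\<close>)
      then have "(v, P ! ka) \<in> (Rel S)\<^sup>*" using m1(1) by blast
      then have c1: "(P ! ka, v) \<in> (Rel S)\<^sup>*" by (rule symD[OF sym_Rel])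
      have "(v, P ! Suc kc) \<in> (Rel (link_edges E lc))\<^sup>*"
        by (rule ell_conn[OF tree lcB]) (use lc pc in \<open>auto simp: A_def priv_def\<close>)
      then have c2: "(v, P ! Suc kc) \<in> (Rel S)\<^sup>*" using m1(2) by blast
      have "{P ! kb, P ! Suc kb} \<in> S"
        by (rule key[OF tree Pp _ _ _ rtrancl_trans[OF c1 c2] SE]) (use kab kbc pc in \<open>auto simp: priv_def\<close>)
      moreover have "la \<in> Fu" "lc \<in> Fu" using la lc unfolding A_def by auto
      ultimately show False using pb ab cb unfolding S_def priv_def by blast
    qed
    have AF: "A \<subseteq> Fu" unfolding A_def by auto
    obtain k1 k2 k3 where k: "priv l1 k1" "priv l2 k2" "priv l3 k3"
      using privex ls AF by (meson subsetD)
    have AFl: "l1 \<in> Fu" "l2 \<in> Fu" "l3 \<in> Fu" using ls AF by auto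
    have dk: "ka \<noteq> kb" if "priv la ka" "priv lb kb" "la \<in> Fu" "la \<noteq> lb" for la lb ka kb
      using that unfolding priv_def by blast
    have d12: "k1 \<noteq> k2" using dk[OF k(1) k(2) AFl(1) ls(4)] .
    have d13: "k1 \<noteq> k3" using dk[OF k(1) k(3) AFl(1) ls(5)] .
    have d23: "k2 \<noteq> k3" using dk[OF k(2) k(3) AFl(2) ls(6)] .
    consider "k1 < k2" "k2 < k3" | "k3 < k2" "k2 < k1" | "k2 < k1" "k1 < k3" | "k3 < k1" "k1 < k2"
      | "k1 < k3" "k3 < k2" | "k2 < k3" "k3 < k1" using d12 d13 d23 by linarith
    then show False
    proof cases
      case 1 show ?thesis by (rule mid[OF ls(1,2,3) ls(4) ls(6)[symmetric] k 1])
    next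
      case 2 show ?thesis by (rule mid[OF ls(3,2,1) ls(6)[symmetric] ls(4) k(3,2,1) 2])
    next
      case 3 show ?thesis by (rule mid[OF ls(2,1,3) ls(4)[symmetric] ls(5)[symmetric] k(2,1,3) 3])
    next
      case 4 show ?thesis by (rule mid[OF ls(3,1,2) ls(5)[symmetric] ls(4)[symmetric] k(3,1,2) 4])
    next
      case 5 show ?thesis by (rule mid[OF ls(1,3,2) ls(5) ls(6) k(1,3,2) 5])
    next
      case 6 show ?thesis by (rule mid[OF ls(2,3,1) ls(6) ls(5) k(2,3,1) 6])
    qed
  qed
qed

end
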